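(* Let $M$ be a real symmetric matrix whose induced signed graph $\Gamma=(G,\sigma)$, $G=(V,E)$, is connected, and let $f$ be an eigenfunction of $M$ for an eigenvalue $\lambda$. Let $D_1,\dots,D_m$ be the weak nodal domains of $f$, and for each $i$ let $g_i(x)=f(x)$ if $x\in D_i$ and $g_i(x)=0$ otherwise. If $g=\sum_{i=1}^m a_ig_i$ with $a_1,\dots,a_m\in\mathbb R$ is an eigenfunction of $M$ for $\lambda$, then $a_1=a_2=\cdots=a_m$.
   Context: The induced signed graph of a real symmetric $n\times n$ matrix $M$ has vertices $x_1,\dots,x_n$, edge $\{x_i,x_j\}$ iff $i\ne j$ and $M_{ij}\ne0$, sign $\sigma_{x_ix_j}=-M_{ij}/|M_{ij}|$. Eigenfunctions are nonzero eigenvectors viewed as functions on $V$. A walk is $y_1,\dots,y_m$ ($m\ge2$) with consecutive vertices adjacent. A W-walk of $f$ is a walk such that for any two consecutive nonzeros $y_i,y_j$ along it ($i<j$, $f(y_i)\ne0\ne f(y_j)$, $f(y_l)=0$ for $i<l<j$) one has $f(y_i)\sigma_{y_iy_{i+1}}\cdots\sigma_{y_{j-1}y_j}f(y_j)>0$. On $\Omega=\{x:f(x)\ne0\}$ the relation "$x=y$ or a W-walk connects $x$ and $y$" is an equivalence relation with classes $W_1,\dots,W_q$; the weak nodal domains of $f$ are the induced subgraphs on $W_i^0=W_i\cup\{x\in V:\text{there is a W-walk from } x \text{ to some vertex of } W_i\}$ (membership $x\in D_i$ refers to the vertex set). *)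

theory Defs
  imports "HOL-Analysis.Analysis"
begin

definition adj :: "real^'n^'n \<Rightarrow> 'n \<Rightarrow> 'n \<Rightarrow> bool" where
  "adj M x y \<longleftrightarrow> x \<noteq> y \<and> M $ x $ y \<noteq> 0"

definition sgn_edge :: "real^'n^'n \<Rightarrow> 'n \<Rightarrow> 'n \<Rightarrow> real" where
  "sgn_edge M x y = - (M $ x $ y / \<bar>M $ x $ y\<bar>)"

definition is_walk :: "real^'n^'n \<Rightarrow> 'n list \<Rightarrow> bool" where
  "is_walk M ys \<longleftrightarrow> length ys \<ge> 2 \<and> (\<forall>i. Suc i < length ys \<longrightarrow> adj M (ys ! i) (ys ! Suc i))"

definition connected_sg :: "real^'n^'n \<Rightarrow> bool" where
  "connected_sg M \<longleftrightarrow> (\<forall>x y. x \<noteq> y \<longrightarrow> (\<exists>ys. is_walk M ys \<and> hd ys = x \<and> last ys = y))"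

definition is_eigenfunction :: "real^'n^'n \<Rightarrow> real \<Rightarrow> real^'n \<Rightarrow> bool" where
  "is_eigenfunction M lam f \<longleftrightarrow> f \<noteq> 0 \<and> M *v f = lam *\<^sub>R f"

definition is_W_walk :: "real^'n^'n \<Rightarrow> real^'n \<Rightarrow> 'n list \<Rightarrow> bool" where
  "is_W_walk M f ys \<longleftrightarrow> is_walk M ys \<and>
     (\<forall>i j. i < j \<and> j < length ys \<and> f $ (ys ! i) \<noteq> 0 \<and> f $ (ys ! j) \<noteq> 0 \<and>
        (\<forall>l. i < l \<and> l < j \<longrightarrow> f $ (ys ! l) = 0) \<longrightarrow>
        f $ (ys ! i) * (\<Prod>l\<in>{i..<j}. sgn_edge M (ys ! l) (ys ! Suc l)) * f $ (ys ! j) > 0)"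

definition W_connects :: "real^'n^'n \<Rightarrow> real^'n \<Rightarrow> 'n \<Rightarrow> 'n \<Rightarrow> bool" where
  "W_connects M f x y \<longleftrightarrow> (\<exists>ys. is_W_walk M f ys \<and> hd ys = x \<and> last ys = y)"

definition nonzero_set :: "real^'n \<Rightarrow> 'n set" where
  "nonzero_set f = {x. f $ x \<noteq> 0}"

definition W_rel :: "real^'n^'n \<Rightarrow> real^'n \<Rightarrow> 'n \<Rightarrow> 'n \<Rightarrow> bool" where
  "W_rel M f x y \<longleftrightarrow> x \<in> nonzero_set f \<and> y \<in> nonzero_set f \<and> (x = y \<or> W_connects M f x y)"

definition W_classes :: "real^'n^'n \<Rightarrow> real^'n \<Rightarrow> 'n set set" where
  "W_classes M f = (\<lambda>x. {y. W_rel M f x y}) ` nonzero_set f"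

definition W_closure :: "real^'n^'n \<Rightarrow> real^'n \<Rightarrow> 'n set \<Rightarrow> 'n set" where
  "W_closure M f W = W \<union> {x. \<exists>y\<in>W. W_connects M f x y}"

definition weak_nodal_domains :: "real^'n^'n \<Rightarrow> real^'n \<Rightarrow> 'n set set" where
  "weak_nodal_domains M f = W_closure M f ` W_classes M f"

definition restrict_fun :: "real^'n \<Rightarrow> 'n set \<Rightarrow> real^'n" where
  "restrict_fun f D = (\<chi> x. if x \<in> D then f $ x else 0)"

end

theory Submission
  imports Defs
begin


lemma M_sym: "transpose M = M \<Longrightarrow> M $ x $ y = M $ y $ x"
  by (metis transpose_def vec_lambda_beta)

lemma adj_sym: "transpose M = M \<Longrightarrow> adj M x y \<Longrightarrow> adj M y x"
  unfolding adj_def using M_sym by metis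

lemma sgn_sym: "transpose M = M \<Longrightarrow> sgn_edge M x y = sgn_edge M y x"
  unfolding sgn_edge_def using M_sym by metis

lemma rev_W:
  assumes sym: "transpose M = M" and W: "is_W_walk M f ys"
  shows "is_W_walk M f (rev ys)"
proof -
  define n where "n = length ys"
  have wk: "is_walk M ys" using W unfolding is_W_walk_def by simp
  have walk: "is_walk M (rev ys)"
    unfolding is_walk_def
  proof (intro conjI allI impI)
    show "2 \<le> length (rev ys)" using wk unfolding is_walk_def by simp
    fix i assume "Suc i < length (rev ys)"
    then have i: "Suc i < n" by (simp add: n_def)
    define m where "m = n - Suc (Suc i)"
    have e1: "rev ys ! i = ys ! Suc m" using i by (simp add: rev_nth n_def m_def Suc_diff_Suc)
    have e2: "rev ys ! Suc i = ys ! m" using i by (simp add: rev_nth n_def m_def)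
    have "adj M (ys ! m) (ys ! Suc m)" using wk i unfolding is_walk_def n_def m_def by auto
    then show "adj M (rev ys ! i) (rev ys ! Suc i)" using e1 e2 adj_sym[OF sym] by metis
  qed
  show ?thesis
    unfolding is_W_walk_def
  proof (intro conjI walk allI impI, elim conjE)
    fix i j assume ij: "i < j" and jn: "j < length (rev ys)"
      and fi: "f $ (rev ys ! i) \<noteq> 0" and fj: "f $ (rev ys ! j) \<noteq> 0"
      and int: "\<forall>l. i < l \<and> l < j \<longrightarrow> f $ (rev ys ! l) = 0"
    have jn': "j < n" using jn by (simp add: n_def)
    define i' where "i' = n - Suc j"
    define j' where "j' = n - Suc i"
    have ri: "rev ys ! i = ys ! j'" using ij jn' by (simp add: rev_nth n_def j'_def)
    have rj: "rev ys ! j = ys ! i'" using ij jn' by (simp add: rev_nth n_def i'_def)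
    have int': "\<forall>l. i' < l \<and> l < j' \<longrightarrow> f $ (ys ! l) = 0"
    proof (intro allI impI)
      fix l assume l: "i' < l \<and> l < j'"
      have nl: "n - Suc (n - Suc l) = l" using l jn' unfolding i'_def j'_def by arith
      have "rev ys ! (n - Suc l) = ys ! (n - Suc (n - Suc l))" using l jn' by (simp add: rev_nth n_def i'_def j'_def)
      then have "rev ys ! (n - Suc l) = ys ! l" using nl by simp
      moreover have "i < n - Suc l \<and> n - Suc l < j" using l jn' unfolding i'_def j'_def by arith
      ultimately show "f $ (ys ! l) = 0" using int by metis
    qed
    have "f $ (ys ! i') * (\<Prod>l\<in>{i'..<j'}. sgn_edge M (ys ! l) (ys ! Suc l)) * f $ (ys ! j') > 0"
    proof -
      have a: "i' < j'" "j' < length ys" using ij jn' unfolding i'_def j'_def n_def by arith+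
      have H: "\<forall>i j. i < j \<and> j < length ys \<and> f $ (ys ! i) \<noteq> 0 \<and> f $ (ys ! j) \<noteq> 0 \<and>
        (\<forall>l. i < l \<and> l < j \<longrightarrow> f $ (ys ! l) = 0) \<longrightarrow>
        f $ (ys ! i) * (\<Prod>l\<in>{i..<j}. sgn_edge M (ys ! l) (ys ! Suc l)) * f $ (ys ! j) > 0"
        using W unfolding is_W_walk_def by blast
      show ?thesis using H[rule_format, of i' j'] a fi fj ri rj int' by auto
    qed
    moreover have "(\<Prod>l\<in>{i..<j}. sgn_edge M (rev ys ! l) (rev ys ! Suc l))
        = (\<Prod>l\<in>{i'..<j'}. sgn_edge M (ys ! l) (ys ! Suc l))"
    proof (rule prod.reindex_bij_witness[of _ "\<lambda>l. n - Suc (Suc l)" "\<lambda>l. n - Suc (Suc l)"])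
      fix a assume a: "a \<in> {i..<j}"
      show "n - Suc (Suc (n - Suc (Suc a))) = a" using a jn' by auto
      show "n - Suc (Suc a) \<in> {i'..<j'}" using a jn' by (auto simp: i'_def j'_def)
      have x1: "rev ys ! a = ys ! Suc (n - Suc (Suc a))" using a jn'
        by (simp add: rev_nth n_def Suc_diff_Suc)
      have x2: "rev ys ! Suc a = ys ! (n - Suc (Suc a))" using a jn'
        by (simp add: rev_nth n_def)
      show "sgn_edge M (ys ! (n - Suc (Suc a))) (ys ! Suc (n - Suc (Suc a))) =
          sgn_edge M (rev ys ! a) (rev ys ! Suc a)"
        using x1 x2 sgn_sym[OF sym] by metis
    next
      fix b assume b: "b \<in> {i'..<j'}"
      show "n - Suc (Suc (n - Suc (Suc b))) = b" using b jn' ij by (auto simp: i'_def j'_def)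
      show "n - Suc (Suc b) \<in> {i..<j}" using b jn' by (auto simp: i'_def j'_def)
    qed
    ultimately show "f $ (rev ys ! i) * (\<Prod>l\<in>{i..<j}. sgn_edge M (rev ys ! l) (rev ys ! Suc l)) *
           f $ (rev ys ! j) > 0" using ri rj by (simp add: mult.commute mult.left_commute)
  qed
qed

lemma W_sym: "transpose M = M \<Longrightarrow> W_connects M f x y \<Longrightarrow> W_connects M f y x"
  unfolding W_connects_def
proof (elim exE conjE)
  fix ys assume s: "transpose M = M" and W: "is_W_walk M f ys" "hd ys = x" "last ys = y"
  have "ys \<noteq> []" using W unfolding is_W_walk_def is_walk_def by auto
  then show "\<exists>ys. is_W_walk M f ys \<and> hd ys = y \<and> last ys = x"
    using rev_W[OF s W(1)] W by (intro exI[of _ "rev ys"]) (simp add: hd_rev last_rev)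
qed


lemma nth_concat:
  assumes "ys \<noteq> []" "zs \<noteq> []" "last ys = hd zs" "length ys - 1 \<le> k"
    "k < length ys - 1 + length zs"
  shows "(ys @ tl zs) ! k = zs ! (k - (length ys - 1))"
proof (cases "k = length ys - 1")
  case True
  then have "(ys @ tl zs) ! k = last ys" using assms(1) by (simp add: nth_append last_conv_nth)
  then show ?thesis using True assms(2,3) by (simp add: hd_conv_nth)
next
  case False
  then have k: "length ys \<le> k" using assms(4) by arith
  then have "(ys @ tl zs) ! k = tl zs ! (k - length ys)" by (simp add: nth_append)
  also have "\<dots> = zs ! Suc (k - length ys)" proof -
    have "k - length ys < length (tl zs)" using assms(1,2,5) k by (cases ys) auto
    then show ?thesis by (simp add: nth_tl)
  qed
  also have "Suc (k - length ys) = k - (length ys - 1)" using k assms(1) by (cases ys) auto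
  finally show ?thesis .
qed

lemma concat_W:
  assumes W1: "is_W_walk M f ys" and W2: "is_W_walk M f zs"
    and eq: "last ys = hd zs" and nz: "f $ hd zs \<noteq> 0"
  shows "is_W_walk M f (ys @ tl zs)"
proof -
  define c where "c = length ys - 1"
  have wk1: "is_walk M ys" and wk2: "is_walk M zs" using W1 W2 unfolding is_W_walk_def by auto
  have l1: "length ys \<ge> 2" and l2: "length zs \<ge> 2" using wk1 wk2 unfolding is_walk_def by auto
  have ne: "ys \<noteq> []" "zs \<noteq> []" using l1 l2 by auto
  have len: "length (ys @ tl zs) = c + length zs" using l1 l2 by (simp add: c_def)
  have lo: "(ys @ tl zs) ! k = ys ! k" if "k \<le> c" for k
  proof -
    have "k < length ys" using that l1 unfolding c_def by arith
    then show ?thesis by (simp add: nth_append)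
  qed
  have hi: "(ys @ tl zs) ! k = zs ! (k - c)" if "c \<le> k" "k < c + length zs" for k
    using nth_concat[OF ne eq] that by (simp add: c_def)
  have wc: "(ys @ tl zs) ! c = hd zs" using hi[of c] ne l2 by (simp add: hd_conv_nth)
  have H1: "\<forall>i j. i < j \<and> j < length ys \<and> f $ (ys ! i) \<noteq> 0 \<and> f $ (ys ! j) \<noteq> 0 \<and>
        (\<forall>l. i < l \<and> l < j \<longrightarrow> f $ (ys ! l) = 0) \<longrightarrow>
        f $ (ys ! i) * (\<Prod>l\<in>{i..<j}. sgn_edge M (ys ! l) (ys ! Suc l)) * f $ (ys ! j) > 0"
    using W1 unfolding is_W_walk_def by blast
  have H2: "\<forall>i j. i < j \<and> j < length zs \<and> f $ (zs ! i) \<noteq> 0 \<and> f $ (zs ! j) \<noteq> 0 \<and>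
        (\<forall>l. i < l \<and> l < j \<longrightarrow> f $ (zs ! l) = 0) \<longrightarrow>
        f $ (zs ! i) * (\<Prod>l\<in>{i..<j}. sgn_edge M (zs ! l) (zs ! Suc l)) * f $ (zs ! j) > 0"
    using W2 unfolding is_W_walk_def by blast
  have walk: "is_walk M (ys @ tl zs)"
    unfolding is_walk_def
  proof (intro conjI allI impI)
    show "2 \<le> length (ys @ tl zs)" using len l1 l2 unfolding c_def by arith
    fix i assume i: "Suc i < length (ys @ tl zs)"
    show "adj M ((ys @ tl zs) ! i) ((ys @ tl zs) ! Suc i)"
    proof (cases "Suc i \<le> c")
      case True
      then show ?thesis using lo[of i] lo[of "Suc i"] wk1 unfolding is_walk_def c_def by auto
    next
      case False
      then have "c \<le> i" by arith
      moreover have "Suc (i - c) < length zs" using i len False by arith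
      moreover have "Suc i - c = Suc (i - c)" using False by arith
      ultimately show ?thesis using hi[of i] hi[of "Suc i"] wk2 i len unfolding is_walk_def by auto
    qed
  qed
  show ?thesis
    unfolding is_W_walk_def
  proof (intro conjI walk allI impI, elim conjE)
    fix i j assume ij: "i < j" and jn: "j < length (ys @ tl zs)"
      and fi: "f $ ((ys @ tl zs) ! i) \<noteq> 0" and fj: "f $ ((ys @ tl zs) ! j) \<noteq> 0"
      and int: "\<forall>l. i < l \<and> l < j \<longrightarrow> f $ ((ys @ tl zs) ! l) = 0"
    have "j \<le> c \<or> c \<le> i"
    proof (rule ccontr)
      assume "\<not> (j \<le> c \<or> c \<le> i)"
      then have "i < c \<and> c < j" by arith
      then show False using int wc nz by auto
    qed
    then show "f $ ((ys @ tl zs) ! i) * (\<Prod>l\<in>{i..<j}. sgn_edge M ((ys @ tl zs) ! l) ((ys @ tl zs) ! Suc l)) *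
           f $ ((ys @ tl zs) ! j) > 0"
    proof
      assume jc: "j \<le> c"
      have p: "(\<Prod>l\<in>{i..<j}. sgn_edge M ((ys @ tl zs) ! l) ((ys @ tl zs) ! Suc l))
          = (\<Prod>l\<in>{i..<j}. sgn_edge M (ys ! l) (ys ! Suc l))"
        by (rule prod.cong) (use jc lo in auto)
      have "j < length ys" using jc l1 unfolding c_def by arith
      moreover have "\<forall>l. i < l \<and> l < j \<longrightarrow> f $ (ys ! l) = 0" using int lo jc by auto
      ultimately show ?thesis using H1[rule_format, of i j] p ij fi fj lo[of i] lo[of j] jc by auto
    next
      assume ci: "c \<le> i"
      have p: "(\<Prod>l\<in>{i..<j}. sgn_edge M ((ys @ tl zs) ! l) ((ys @ tl zs) ! Suc l))
          = (\<Prod>l\<in>{i-c..<j-c}. sgn_edge M (zs ! l) (zs ! Suc l))"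
      proof (rule prod.reindex_bij_witness[of _ "\<lambda>l. l + c" "\<lambda>l. l - c"])
        fix a assume a: "a \<in> {i..<j}"
        show "a - c + c = a" using a ci by auto
        show "a - c \<in> {i - c..<j - c}" using a ci by auto
        have "Suc a - c = Suc (a - c)" using a ci by auto
        then show "sgn_edge M (zs ! (a - c)) (zs ! Suc (a - c)) =
          sgn_edge M ((ys @ tl zs) ! a) ((ys @ tl zs) ! Suc a)"
          using hi[of a] hi[of "Suc a"] a ci jn len by auto
      next
        fix b assume b: "b \<in> {i - c..<j - c}"
        show "b + c - c = b" by simp
        show "b + c \<in> {i..<j}" using b ci by auto
      qed
      have "j - c < length zs" using jn len ci ij by arith
      moreover have "i - c < j - c" using ij ci by arith
      moreover have "\<forall>l. i - c < l \<and> l < j - c \<longrightarrow> f $ (zs ! l) = 0"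
      proof (intro allI impI)
        fix l assume l: "i - c < l \<and> l < j - c"
        then have "i < l + c \<and> l + c < j" by arith
        then show "f $ (zs ! l) = 0" using int hi[of "l + c"] jn len by auto
      qed
      ultimately show ?thesis using H2[rule_format, of "i - c" "j - c"] p ij fi fj hi[of i] hi[of j] ci jn len by auto
    qed
  qed
qed

lemma W_trans:
  assumes "W_connects M f x y" "W_connects M f y z" "f $ y \<noteq> 0"
  shows "W_connects M f x z"
proof -
  obtain ys where y: "is_W_walk M f ys" "hd ys = x" "last ys = y" using assms(1) unfolding W_connects_def by blast
  obtain zs where z: "is_W_walk M f zs" "hd zs = y" "last zs = z" using assms(2) unfolding W_connects_def by blast
  have l: "length ys \<ge> 2" "length zs \<ge> 2" using y z unfolding is_W_walk_def is_walk_def by auto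
  have "tl zs \<noteq> []" using l by (cases zs) auto
  then have "hd (ys @ tl zs) = x" "last (ys @ tl zs) = z"
    using y z l by (cases ys, auto simp: last_tl)+
  moreover have "is_W_walk M f (ys @ tl zs)" using concat_W[OF y(1) z(1)] y z assms(3) by simp
  ultimately show ?thesis unfolding W_connects_def by blast
qed


definition pw :: "real^'n^'n \<Rightarrow> 'n list \<Rightarrow> real" where
  "pw M L = (\<Prod>l\<in>{0..<length L - 1}. sgn_edge M (L ! l) (L ! Suc l))"

lemma pw_snoc:
  assumes "xs \<noteq> []"
  shows "pw M (xs @ [v]) = pw M xs * sgn_edge M (last xs) v"
proof -
  obtain m where m: "length xs = Suc m" using assms by (cases xs) auto
  have "pw M (xs @ [v]) = (\<Prod>l\<in>{0..<Suc m}. sgn_edge M ((xs @ [v]) ! l) ((xs @ [v]) ! Suc l))"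
    unfolding pw_def using m by simp
  also have "\<dots> = (\<Prod>l\<in>{0..<m}. sgn_edge M ((xs @ [v]) ! l) ((xs @ [v]) ! Suc l)) *
      sgn_edge M ((xs @ [v]) ! m) ((xs @ [v]) ! Suc m)" by simp
  also have "(\<Prod>l\<in>{0..<m}. sgn_edge M ((xs @ [v]) ! l) ((xs @ [v]) ! Suc l)) = pw M xs"
    unfolding pw_def using m by (intro prod.cong) (auto simp: nth_append)
  also have "(xs @ [v]) ! m = last xs" using m assms by (simp add: nth_append last_conv_nth)
  also have "(xs @ [v]) ! Suc m = v" using m by (simp add: nth_append)
  finally show ?thesis .
qed

lemma single_W:
  assumes wk: "is_walk M L" and L: "L = u # zs @ [v]" and z: "\<forall>w\<in>set zs. f $ w = 0"
    and fu: "f $ u \<noteq> 0" and fv: "f $ v \<noteq> 0" and pos: "f $ u * pw M L * f $ v > 0"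
  shows "is_W_walk M f L"
  unfolding is_W_walk_def
proof (intro conjI wk allI impI, elim conjE)
  define n where "n = length L"
  have n: "n = length zs + 2" using L by (simp add: n_def)
  have mid: "f $ (L ! k) = 0" if "0 < k" "k < n - 1" for k
  proof -
    have "L ! k = zs ! (k - 1)" using L that n by (cases k) (auto simp: nth_append)
    moreover have "k - 1 < length zs" using that n by arith
    ultimately show ?thesis using z by (simp)
  qed
  fix i j assume ij: "i < j" and jn: "j < length L"
    and fi: "f $ (L ! i) \<noteq> 0" and fj: "f $ (L ! j) \<noteq> 0"
  have i0: "i = 0"
  proof (rule ccontr)
    assume "i \<noteq> 0"
    then have "0 < i" "i < n - 1" using ij jn unfolding n_def by arith+
    then show False using mid fi by blast
  qed
  have jl: "j = n - 1" using mid[of j] ij jn fj by (fastforce simp: n_def)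
  have "L ! 0 = u" "L ! (n - 1) = v" using L n by (auto simp: nth_append)
  then show "f $ (L ! i) * (\<Prod>l\<in>{i..<j}. sgn_edge M (L ! l) (L ! Suc l)) * f $ (L ! j) > 0"
    using pos i0 jl unfolding pw_def n_def by simp
qed

lemma sgn_edge_eq: "sgn_edge M x y = - (M $ x $ y / \<bar>M $ x $ y\<bar>)" by (simp add: sgn_edge_def)

lemma adj_pos:
  assumes "adj M x y" "f $ x \<noteq> 0" "f $ y \<noteq> 0" "\<not> W_connects M f x y"
  shows "M $ x $ y * f $ x * f $ y > 0"
proof (rule ccontr)
  assume "\<not> M $ x $ y * f $ x * f $ y > 0"
  then have neg: "M $ x $ y * f $ x * f $ y < 0" using assms(1-3) unfolding adj_def
    by (simp add: linorder_not_less order_le_less)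
  have m: "M $ x $ y \<noteq> 0" using assms(1) unfolding adj_def by simp
  have wk: "is_walk M [x, y]" using assms(1) unfolding is_walk_def by (auto simp: less_Suc_eq)
  have "pw M [x, y] = sgn_edge M x y" unfolding pw_def by simp
  then have "f $ x * pw M [x, y] * f $ y = - (M $ x $ y * f $ x * f $ y) / \<bar>M $ x $ y\<bar>"
    by (simp add: sgn_edge_eq field_simps)
  also have "\<dots> > 0" using divide_neg_pos[OF neg, of "\<bar>M $ x $ y\<bar>"] m by simp
  finally have "is_W_walk M f [x, y]" using single_W[OF wk, of x "[]" y] assms(2,3) by simp
  then show False using assms(4) unfolding W_connects_def by force
qed


lemma sgn_edge_nz: "M $ x $ y \<noteq> 0 \<Longrightarrow> sgn_edge M x y \<noteq> 0"
  by (simp add: sgn_edge_def)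

lemma pw_nz: assumes "is_walk M L" shows "pw M L \<noteq> 0"
proof -
  have "\<forall>l\<in>{0..<length L - 1}. sgn_edge M (L ! l) (L ! Suc l) \<noteq> 0"
  proof
    fix l assume "l \<in> {0..<length L - 1}"
    then have "adj M (L ! l) (L ! Suc l)" using assms unfolding is_walk_def by auto
    then show "sgn_edge M (L ! l) (L ! Suc l) \<noteq> 0" using sgn_edge_nz unfolding adj_def by blast
  qed
  then show ?thesis unfolding pw_def by (simp add: prod_zero_iff)
qed

lemma walk_snoc:
  assumes "is_walk M (xs @ [v])" "xs \<noteq> []" "adj M (last xs) w"
  shows "is_walk M (xs @ [w])"
  unfolding is_walk_def
proof (intro conjI allI impI)
  show "2 \<le> length (xs @ [w])" using assms(1) unfolding is_walk_def by simp
  fix i assume i: "Suc i < length (xs @ [w])"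
  show "adj M ((xs @ [w]) ! i) ((xs @ [w]) ! Suc i)"
  proof (cases "Suc i < length xs")
    case True
    then have "adj M ((xs @ [v]) ! i) ((xs @ [v]) ! Suc i)" using assms(1) unfolding is_walk_def by auto
    then show ?thesis using True by (simp add: nth_append)
  next
    case False
    then have "Suc i = length xs" using i by simp
    then have "i = length xs - 1" by simp
    then show ?thesis using assms(2,3) by (simp add: nth_append last_conv_nth)
  qed
qed

context
  fixes M :: "real^'n^'n" and f g :: "real^'n" and lam :: real and phi :: "'n \<Rightarrow> real"
  assumes sym: "transpose M = M" and ef: "M *v f = lam *\<^sub>R f" and eg: "M *v g = lam *\<^sub>R g"
    and gphi: "\<And>x. g $ x = phi x * f $ x"
    and Hphi: "\<And>u v. f $ u \<noteq> 0 \<Longrightarrow> f $ v \<noteq> 0 \<Longrightarrow> W_connects M f u v \<Longrightarrow> phi u = phi v"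
begin

lemma rowf: "(\<Sum>y\<in>UNIV. M $ x $ y * f $ y) = lam * f $ x"
  using arg_cong[OF ef, of "\<lambda>w. w $ x"] by (simp add: matrix_vector_mult_def)

lemma rowg: "(\<Sum>y\<in>UNIV. M $ x $ y * g $ y) = lam * g $ x"
  using arg_cong[OF eg, of "\<lambda>w. w $ x"] by (simp add: matrix_vector_mult_def)

lemma colf: "(\<Sum>x\<in>UNIV. M $ x $ y * f $ x) = lam * f $ y"
  using rowf[of y] M_sym[OF sym] by simp

lemma Q0: "(\<Sum>x\<in>UNIV. \<Sum>y\<in>UNIV. M $ x $ y * f $ x * f $ y * (phi y - phi x)^2) = 0"
proof -
  have split: "M $ x $ y * f $ x * f $ y * (phi y - phi x)^2 =
     M $ x $ y * f $ x * (f $ y * (phi y)^2) - 2 * (g $ x * (M $ x $ y * g $ y))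
     + (f $ x * (phi x)^2) * (M $ x $ y * f $ y)" for x y
    by (simp add: gphi power2_eq_square algebra_simps)
  have A: "(\<Sum>x\<in>UNIV. \<Sum>y\<in>UNIV. M $ x $ y * f $ x * (f $ y * (phi y)^2)) = (\<Sum>y\<in>UNIV. lam * (g $ y)^2)"
  proof -
    have "(\<Sum>x\<in>UNIV. \<Sum>y\<in>UNIV. M $ x $ y * f $ x * (f $ y * (phi y)^2))
        = (\<Sum>y\<in>UNIV. \<Sum>x\<in>UNIV. M $ x $ y * f $ x * (f $ y * (phi y)^2))" by (rule sum.swap)
    also have "\<dots> = (\<Sum>y\<in>UNIV. (\<Sum>x\<in>UNIV. M $ x $ y * f $ x) * (f $ y * (phi y)^2))"
      by (simp add: sum_distrib_right)
    also have "\<dots> = (\<Sum>y\<in>UNIV. (lam * f $ y) * (f $ y * (phi y)^2))"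
      by (simp only: colf)
    also have "\<dots> = (\<Sum>y\<in>UNIV. lam * (g $ y)^2)"
      by (simp add: gphi power2_eq_square algebra_simps)
    finally show ?thesis .
  qed
  have B: "(\<Sum>x\<in>UNIV. \<Sum>y\<in>UNIV. g $ x * (M $ x $ y * g $ y)) = (\<Sum>y\<in>UNIV. lam * (g $ y)^2)"
  proof -
    have "(\<Sum>x\<in>UNIV. \<Sum>y\<in>UNIV. g $ x * (M $ x $ y * g $ y)) = (\<Sum>x\<in>UNIV. g $ x * (\<Sum>y\<in>UNIV. M $ x $ y * g $ y))"
      by (simp add: sum_distrib_left)
    also have "\<dots> = (\<Sum>x\<in>UNIV. g $ x * (lam * g $ x))" by (simp only: rowg)
    also have "\<dots> = (\<Sum>y\<in>UNIV. lam * (g $ y)^2)"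
      by (simp add: power2_eq_square algebra_simps)
    finally show ?thesis .
  qed
  have C: "(\<Sum>x\<in>UNIV. \<Sum>y\<in>UNIV. (f $ x * (phi x)^2) * (M $ x $ y * f $ y)) = (\<Sum>y\<in>UNIV. lam * (g $ y)^2)"
  proof -
    have "(\<Sum>x\<in>UNIV. \<Sum>y\<in>UNIV. (f $ x * (phi x)^2) * (M $ x $ y * f $ y)) = (\<Sum>x\<in>UNIV. (f $ x * (phi x)^2) * (\<Sum>y\<in>UNIV. M $ x $ y * f $ y))"
      by (simp add: sum_distrib_left)
    also have "\<dots> = (\<Sum>x\<in>UNIV. (f $ x * (phi x)^2) * (lam * f $ x))" by (simp only: rowf)
    also have "\<dots> = (\<Sum>y\<in>UNIV. lam * (g $ y)^2)"
      by (simp add: gphi power2_eq_square algebra_simps)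
    finally show ?thesis .
  qed
  have inner: "(\<Sum>y\<in>UNIV. M $ x $ y * f $ x * f $ y * (phi y - phi x)^2) =
     (\<Sum>y\<in>UNIV. M $ x $ y * f $ x * (f $ y * (phi y)^2)) - 2 * (\<Sum>y\<in>UNIV. g $ x * (M $ x $ y * g $ y))
     + (\<Sum>y\<in>UNIV. (f $ x * (phi x)^2) * (M $ x $ y * f $ y))" for x
    by (simp only: split sum.distrib sum_subtractf sum_distrib_left)
  have "(\<Sum>x\<in>UNIV. \<Sum>y\<in>UNIV. M $ x $ y * f $ x * f $ y * (phi y - phi x)^2) =
     (\<Sum>x\<in>UNIV. \<Sum>y\<in>UNIV. M $ x $ y * f $ x * (f $ y * (phi y)^2)) - 2 * (\<Sum>x\<in>UNIV. \<Sum>y\<in>UNIV. g $ x * (M $ x $ y * g $ y))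
     + (\<Sum>x\<in>UNIV. \<Sum>y\<in>UNIV. (f $ x * (phi x)^2) * (M $ x $ y * f $ y))"
    by (simp only: inner sum.distrib sum_subtractf sum_distrib_left)
  then show ?thesis using A B C by simp
qed

lemma Tnn: "M $ x $ y * f $ x * f $ y * (phi y - phi x)^2 \<ge> 0"
proof (cases "M $ x $ y = 0 \<or> f $ x = 0 \<or> f $ y = 0 \<or> x = y")
  case True then show ?thesis by auto
next
  case False
  then have a: "adj M x y" "f $ x \<noteq> 0" "f $ y \<noteq> 0" unfolding adj_def by auto
  show ?thesis
  proof (cases "W_connects M f x y")
    case True then show ?thesis using Hphi a by simp
  next
    case False
    then have "M $ x $ y * f $ x * f $ y > 0" using adj_pos a by blast
    then show ?thesis by simp
  qed
qed

lemma adj_eq: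
  assumes "adj M x y" "f $ x \<noteq> 0" "f $ y \<noteq> 0"
  shows "phi x = phi y"
proof (cases "W_connects M f x y")
  case True then show ?thesis using Hphi assms by simp
next
  case False
  then have p: "M $ x $ y * f $ x * f $ y > 0" using adj_pos assms by blast
  have "\<forall>x\<in>UNIV. (\<Sum>y\<in>UNIV. M $ x $ y * f $ x * f $ y * (phi y - phi x)^2) = 0"
    using Q0 by (subst sum_nonneg_eq_0_iff[symmetric]) (auto intro: sum_nonneg Tnn)
  then have "(\<Sum>y\<in>UNIV. M $ x $ y * f $ x * f $ y * (phi y - phi x)^2) = 0" by simp
  then have "M $ x $ y * f $ x * f $ y * (phi y - phi x)^2 = 0"
    using sum_nonneg_eq_0_iff[of UNIV "\<lambda>y. M $ x $ y * f $ x * f $ y * (phi y - phi x)^2"] Tnn by auto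
  then have "(phi y - phi x)^2 = 0" using p by (metis mult_eq_0_iff less_irrefl)
  then show ?thesis by simp
qed




lemma same_sign_eq:
  assumes fz: "f $ z = 0" and pos: "(M $ z $ w * f $ w) * (M $ z $ y * f $ y) > 0"
  shows "phi w = phi y"
proof (cases "w = y")
  case True then show ?thesis by simp
next
  case False
  have nz: "M $ z $ w \<noteq> 0" "f $ w \<noteq> 0" "M $ z $ y \<noteq> 0" "f $ y \<noteq> 0" using pos by auto
  have "z \<noteq> w" "z \<noteq> y" using pos fz by auto
  then have a1: "adj M w z" and a2: "adj M z y"
    using nz M_sym[OF sym, of z w] unfolding adj_def by auto
  have wk: "is_walk M [w, z, y]" using a1 a2 unfolding is_walk_def by (auto simp: less_Suc_eq nth_Cons')
  have "pw M [w, z, y] = sgn_edge M w z * sgn_edge M z y" unfolding pw_def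
    by (simp add: numeral_2_eq_2 atLeast0_lessThan_Suc)
  then have "f $ w * pw M [w, z, y] * f $ y =
      ((M $ z $ w * f $ w) * (M $ z $ y * f $ y)) / (\<bar>M $ z $ w\<bar> * \<bar>M $ z $ y\<bar>)"
    using M_sym[OF sym, of z w] by (simp add: sgn_edge_eq field_simps)
  also have "\<dots> > 0" using pos nz by (simp add: divide_pos_pos)
  finally have "is_W_walk M f [w, z, y]"
    using single_W[OF wk, of w "[z]" y] nz fz by simp
  then have "W_connects M f w y" unfolding W_connects_def by force
  then show ?thesis using Hphi nz by blast
qed


lemma zero_vertex:
  assumes fz: "f $ z = 0" and neg: "(M $ z $ v * f $ v) * (M $ z $ v' * f $ v') < 0"
  shows "phi v = phi v'"
proof -
  define t where "t y = M $ z $ y * f $ y" for y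
  have s1: "(\<Sum>y\<in>UNIV. t y) = 0" using rowf[of z] fz by (simp add: t_def)
  have s2: "(\<Sum>y\<in>UNIV. t y * phi y) = 0"
  proof -
    have "(\<Sum>y\<in>UNIV. t y * phi y) = (\<Sum>y\<in>UNIV. M $ z $ y * g $ y)"
      by (simp add: t_def gphi algebra_simps)
    also have "\<dots> = 0" using rowg[of z] gphi[of z] fz by simp
    finally show ?thesis .
  qed
  have "(\<Sum>y\<in>UNIV. t y * (phi y - phi v)) = (\<Sum>y\<in>UNIV. t y * phi y) - (\<Sum>y\<in>UNIV. t y) * phi v"
    by (simp add: algebra_simps sum_subtractf sum_distrib_right sum_distrib_left)
  then have s3: "(\<Sum>y\<in>UNIV. t y * (phi y - phi v)) = 0" using s1 s2 by simp
  have pt: "t y * (phi y - phi v) = (if t y * t v < 0 then t y * (phi v' - phi v) else 0)" for y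
  proof (cases "t y * t v < 0")
    case True
    have tv: "t v * t v' < 0" using neg by (simp add: t_def)
    have "(t y * t v) * (t v * t v') > 0" using True tv by (simp add: mult_neg_neg)
    then have "(t y * t v') * (t v * t v) > 0" by (simp add: algebra_simps)
    then have "t y * t v' > 0" by (metis zero_less_mult_iff not_square_less_zero)
    then have "phi y = phi v'" using same_sign_eq[OF fz] unfolding t_def by blast
    then show ?thesis using True by simp
  next
    case False
    show ?thesis
    proof (cases "t y = 0")
      case True then show ?thesis by simp
    next
      case nz: False
      have "t v \<noteq> 0" using neg by (auto simp: t_def)
      then have "t y * t v > 0" using False nz by (simp add: linorder_not_less order_le_less)
      then have "phi y = phi v" using same_sign_eq[OF fz] unfolding t_def by blast
      then show ?thesis using False by simp
    qed
  qed
  define S where "S = {y. t y * t v < 0}"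
  have "(\<Sum>y\<in>UNIV. t y * (phi y - phi v)) = (\<Sum>y\<in>S. t y) * (phi v' - phi v)"
    unfolding pt S_def by (simp add: sum.If_cases sum_distrib_right)
  then have e: "(\<Sum>y\<in>S. t y) * (phi v' - phi v) = 0" using s3 by simp
  have "0 < (\<Sum>y\<in>S. - (t y * t v))"
    by (rule sum_pos2[of S v']) (use neg in \<open>auto simp: S_def t_def mult.commute\<close>)
  then have "(\<Sum>y\<in>S. t y) * t v < 0" by (simp add: sum_distrib_right[symmetric] sum_negf)
  then have "(\<Sum>y\<in>S. t y) \<noteq> 0" by auto
  then show ?thesis using e by simp
qed



lemma zero_path:
  assumes wk: "is_walk M (u # zs @ [v])" and zsne: "zs \<noteq> []" and z0: "\<forall>w\<in>set zs. f $ w = 0"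
    and fu: "f $ u \<noteq> 0" and fv: "f $ v \<noteq> 0"
  shows "phi u = phi v"
proof -
  define xs where "xs = u # zs"
  define z where "z = last zs"
  have lx: "last xs = z" using zsne by (simp add: xs_def z_def)
  have fz: "f $ z = 0" using z0 zsne by (simp add: z_def)
  have L: "u # zs @ [v] = xs @ [v]" by (simp add: xs_def)
  have xne: "xs \<noteq> []" by (simp add: xs_def)
  have azv: "adj M z v"
  proof -
    have w: "is_walk M (xs @ [v])" using wk L by simp
    have "Suc (length xs - 1) < length (xs @ [v])" using xne by simp
    then have "adj M ((xs @ [v]) ! (length xs - 1)) ((xs @ [v]) ! Suc (length xs - 1))"
      using w unfolding is_walk_def by blast
    then show ?thesis using xne lx by (simp add: nth_append last_conv_nth)
  qed
  define t where "t y = M $ z $ y * f $ y" for y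
  have tv: "t v \<noteq> 0" using azv fv unfolding adj_def t_def by simp
  define K where "K = f $ u * pw M xs"
  have pwL: "pw M (xs @ [v]) = pw M xs * sgn_edge M z v" using pw_snoc[OF xne] lx by simp
  have "pw M (xs @ [v]) \<noteq> 0" using pw_nz[of M "xs @ [v]"] wk L by simp
  then have Knz: "K \<noteq> 0" using fu pwL by (simp add: K_def)
  have val: "f $ u * pw M (xs @ [w]) * f $ w = - (K * t w) / \<bar>M $ z $ w\<bar>" for w
    using pw_snoc[OF xne, of M w] lx by (simp add: K_def t_def sgn_edge_eq)
  show ?thesis
  proof (cases "f $ u * pw M (xs @ [v]) * f $ v > 0")
    case True
    then have "is_W_walk M f (u # zs @ [v])" using single_W[OF wk refl z0 fu fv] True by (simp add: xs_def)
    then have "W_connects M f u v" unfolding W_connects_def by force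
    then show ?thesis using Hphi fu fv by blast
  next
    case False
    have Ktv: "K * t v > 0"
    proof -
      have pa: "\<bar>M $ z $ v\<bar> > 0" using azv unfolding adj_def by simp
      have "\<not> (K * t v < 0)"
      proof
        assume "K * t v < 0"
        then have "- (K * t v) / \<bar>M $ z $ v\<bar> > 0" using pa by (intro divide_pos_pos) auto
        then show False using False val[of v] by linarith
      qed
      moreover have "K * t v \<noteq> 0" using Knz tv by simp
      ultimately show ?thesis by linarith
    qed
    have "\<exists>v'. t v' * t v < 0"
    proof (rule ccontr)
      assume "\<not> ?thesis"
      then have nn: "\<forall>y. t y * t v \<ge> 0" by (auto simp: not_less)
      have "t v * t v \<le> (\<Sum>y\<in>UNIV. t y * t v)"
        by (rule member_le_sum) (use nn in auto)
      also have "\<dots> = (\<Sum>y\<in>UNIV. t y) * t v" by (simp add: sum_distrib_right)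
      also have "\<dots> = 0" using rowf[of z] fz by (simp add: t_def)
      finally have "t v * t v \<le> 0" .
      then show False using tv by (metis not_square_less_zero order_le_less mult_eq_0_iff)
    qed
    then obtain v' where v': "t v' * t v < 0" by blast
    have tv': "t v' \<noteq> 0" using v' by auto
    have fv': "f $ v' \<noteq> 0" and mzv': "M $ z $ v' \<noteq> 0" using tv' by (auto simp: t_def)
    have "z \<noteq> v'" using tv' fz by (auto simp: t_def)
    then have azv': "adj M z v'" using mzv' unfolding adj_def by simp
    have wk': "is_walk M (xs @ [v'])" using walk_snoc[of M xs v v'] wk L xne lx azv' by simp
    have "(K * t v) * (t v' * t v) < 0" using Ktv v' by (rule mult_pos_neg)
    then have "(K * t v') * (t v * t v) < 0" by (simp add: mult_ac)
    then have "K * t v' < 0" by (metis mult_less_0_iff not_square_less_zero)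
    moreover have "\<bar>M $ z $ v'\<bar> > 0" using mzv' by simp
    ultimately have "K * t v' / \<bar>M $ z $ v'\<bar> < 0" by (rule divide_neg_pos)
    then have "f $ u * pw M (xs @ [v']) * f $ v' > 0" using val[of v'] by linarith
    then have "is_W_walk M f (xs @ [v'])" using single_W[OF wk', of u zs v'] z0 fu fv' by (simp add: xs_def)
    then have "W_connects M f u v'" unfolding W_connects_def by (force simp: xs_def)
    then have "phi u = phi v'" using Hphi fu fv' by blast
    moreover have "phi v' = phi v" using zero_vertex[OF fz, of v' v] v' unfolding t_def by simp
    ultimately show ?thesis by simp
  qed
qed


lemma walk_eq:
  "is_walk M ys \<Longrightarrow> f $ hd ys \<noteq> 0 \<Longrightarrow> f $ last ys \<noteq> 0 \<Longrightarrow> phi (hd ys) = phi (last ys)"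
proof (induction "length ys" arbitrary: ys rule: less_induct)
  case less
  have n2: "length ys \<ge> 2" using less.prems unfolding is_walk_def by simp
  show ?case
  proof (cases "\<exists>k. 0 < k \<and> k < length ys - 1 \<and> f $ (ys ! k) \<noteq> 0")
    case True
    then obtain k where k: "0 < k" "k < length ys - 1" "f $ (ys ! k) \<noteq> 0" by blast
    have W: "\<And>i. Suc i < length ys \<Longrightarrow> adj M (ys ! i) (ys ! Suc i)"
      using less.prems(1) unfolding is_walk_def by blast
    have w1: "is_walk M (take (Suc k) ys)"
      unfolding is_walk_def
    proof (intro conjI allI impI)
      show "2 \<le> length (take (Suc k) ys)" using k by simp
      fix i assume i: "Suc i < length (take (Suc k) ys)"
      then have "Suc i < length ys" "Suc i < Suc k" by auto
      then show "adj M (take (Suc k) ys ! i) (take (Suc k) ys ! Suc i)" using W by simp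
    qed
    have h1: "hd (take (Suc k) ys) = hd ys" using n2 by (cases ys) auto
    have l1: "last (take (Suc k) ys) = ys ! k" using k by (simp add: take_Suc_conv_app_nth)
    have w2: "is_walk M (drop k ys)"
      unfolding is_walk_def
    proof (intro conjI allI impI)
      show "2 \<le> length (drop k ys)" using k by simp
      fix i assume i: "Suc i < length (drop k ys)"
      then have "Suc (k + i) < length ys" by auto
      then have "adj M (ys ! (k + i)) (ys ! Suc (k + i))" using W by blast
      then show "adj M (drop k ys ! i) (drop k ys ! Suc i)" using i by simp
    qed
    have h2: "hd (drop k ys) = ys ! k" using k by (simp add: hd_drop_conv_nth)
    have l2: "last (drop k ys) = last ys" using k by simp
    have "phi (hd ys) = phi (ys ! k)"
      using less.hyps[of "take (Suc k) ys"] w1 h1 l1 k less.prems by simp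
    moreover have "phi (ys ! k) = phi (last ys)"
      using less.hyps[of "drop k ys"] w2 h2 l2 k less.prems by simp
    ultimately show ?thesis by simp
  next
    case False
    obtain u rest where ys: "ys = u # rest" using n2 by (cases ys) auto
    have "rest \<noteq> []" using n2 ys by auto
    then obtain zs v where rest: "rest = zs @ [v]" by (metis rev_exhaust)
    have ys': "ys = u # zs @ [v]" using ys rest by simp
    have z0: "\<forall>w\<in>set zs. f $ w = 0"
    proof
      fix w assume "w \<in> set zs"
      then obtain i where i: "i < length zs" "zs ! i = w" by (auto simp: in_set_conv_nth)
      have "ys ! Suc i = w" using i ys' by (simp add: nth_append)
      moreover have "0 < Suc i" "Suc i < length ys - 1" using i ys' by auto
      ultimately show "f $ w = 0" using False by auto
    qed
    show ?thesis
    proof (cases "zs = []")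
      case True
      then have "Suc 0 < length ys" "ys ! 0 = u" "ys ! Suc 0 = v" using ys' by auto
      then have "adj M u v" using less.prems(1) unfolding is_walk_def by metis
      then show ?thesis using adj_eq less.prems ys' True by simp
    next
      case False
      then show ?thesis using zero_path[of u zs v] less.prems ys' z0 by simp
    qed
  qed
qed

lemma all_eq:
  assumes conn: "connected_sg M" and "f $ x \<noteq> 0" "f $ y \<noteq> 0"
  shows "phi x = phi y"
proof (cases "x = y")
  case True then show ?thesis by simp
next
  case False
  then obtain ys where "is_walk M ys" "hd ys = x" "last ys = y" using conn unfolding connected_sg_def by blast
  then show ?thesis using walk_eq assms by blast
qed


end


definition cls :: "real^'n^'n \<Rightarrow> real^'n \<Rightarrow> 'n \<Rightarrow> 'n set" where
  "cls M f x = {y. W_rel M f x y}"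

definition Cd :: "real^'n^'n \<Rightarrow> real^'n \<Rightarrow> 'n \<Rightarrow> 'n set" where
  "Cd M f x = W_closure M f (cls M f x)"

lemma cls_eq:
  assumes sym: "transpose M = M" and "f $ x \<noteq> 0" "f $ z \<noteq> 0" and c: "W_connects M f x z"
  shows "cls M f x = cls M f z"
proof -
  have c': "W_connects M f z x" using W_sym[OF sym c] .
  show ?thesis
    unfolding cls_def W_rel_def nonzero_set_def
    using assms c' W_trans by blast
qed

lemma dom_mem:
  assumes sym: "transpose M = M" and fx: "f $ x \<noteq> 0" and D: "D \<in> weak_nodal_domains M f"
  shows "x \<in> D \<longleftrightarrow> D = Cd M f x"
proof
  assume "D = Cd M f x"
  then show "x \<in> D" using fx unfolding Cd_def W_closure_def cls_def W_rel_def nonzero_set_def by simp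
next
  assume xD: "x \<in> D"
  obtain y where y: "f $ y \<noteq> 0" "D = W_closure M f (cls M f y)"
    using D unfolding weak_nodal_domains_def W_classes_def cls_def nonzero_set_def by auto
  have "cls M f y = cls M f x"
  proof -
    have "x \<in> cls M f y \<or> (\<exists>w\<in>cls M f y. W_connects M f x w)"
      using xD y(2) unfolding W_closure_def by auto
    then show ?thesis
    proof
      assume "x \<in> cls M f y"
      then have "y = x \<or> W_connects M f y x" unfolding cls_def W_rel_def by simp
      then show ?thesis using cls_eq[OF sym y(1) fx] by auto
    next
      assume "\<exists>w\<in>cls M f y. W_connects M f x w"
      then obtain w where w: "w \<in> cls M f y" "W_connects M f x w" by blast
      have fw: "f $ w \<noteq> 0" using w(1) unfolding cls_def W_rel_def nonzero_set_def by simp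
      have "cls M f x = cls M f w" using cls_eq[OF sym fx fw w(2)] .
      moreover have "cls M f y = cls M f w"
        using w(1) cls_eq[OF sym y(1) fw] unfolding cls_def W_rel_def by auto
      ultimately show ?thesis by simp
    qed
  qed
  then show "D = Cd M f x" using y(2) unfolding Cd_def by simp
qed

lemma Cd_in: "f $ x \<noteq> 0 \<Longrightarrow> Cd M f x \<in> weak_nodal_domains M f"
  unfolding Cd_def weak_nodal_domains_def W_classes_def cls_def nonzero_set_def by auto

theorem lemma4p4:
  fixes M :: "real^'n^'n" and f :: "real^'n" and lam :: real and a :: "'n set \<Rightarrow> real"
  assumes "transpose M = M"
    and "connected_sg M"
    and "is_eigenfunction M lam f"
    and "is_eigenfunction M lam (\<Sum>D\<in>weak_nodal_domains M f. a D *\<^sub>R restrict_fun f D)"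
  shows "\<forall>D1\<in>weak_nodal_domains M f. \<forall>D2\<in>weak_nodal_domains M f. a D1 = a D2"
proof -
  note sym = assms(1)
  define Dom where "Dom = weak_nodal_domains M f"
  define g where "g = (\<Sum>D\<in>Dom. a D *\<^sub>R restrict_fun f D)"
  define phi where "phi x = (if f $ x \<noteq> 0 then a (Cd M f x) else 0)" for x
  have ef: "M *v f = lam *\<^sub>R f" using assms(3) unfolding is_eigenfunction_def by simp
  have eg: "M *v g = lam *\<^sub>R g" using assms(4) unfolding is_eigenfunction_def g_def Dom_def by simp
  have gphi: "g $ x = phi x * f $ x" for x
  proof -
    have "g $ x = (\<Sum>D\<in>Dom. a D * (if x \<in> D then f $ x else 0))"
      unfolding g_def by (simp add: restrict_fun_def)
    also have "\<dots> = phi x * f $ x"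
    proof (cases "f $ x = 0")
      case True
      have "\<And>D. a D * (if x \<in> D then f $ x else 0) = 0" using True by simp
      have "(\<Sum>D\<in>Dom. a D * (if x \<in> D then f $ x else 0)) = 0"
        by (rule sum.neutral) (use True in \<open>simp\<close>)
      then show ?thesis using True by (simp add: phi_def)
    next
      case False
      have "(\<Sum>D\<in>Dom. a D * (if x \<in> D then f $ x else 0)) =
          (\<Sum>D\<in>Dom. if D = Cd M f x then a D * f $ x else 0)"
        by (rule sum.cong) (use dom_mem[OF sym False] in \<open>auto simp: Dom_def\<close>)
      also have "\<dots> = a (Cd M f x) * f $ x"
        using Cd_in[OF False] by (simp add: Dom_def)
      finally show ?thesis using False by (simp add: phi_def)
    qed
    finally show ?thesis .
  qed
  have Hphi: "phi u = phi v" if "f $ u \<noteq> 0" "f $ v \<noteq> 0" "W_connects M f u v" for u v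
    using cls_eq[OF sym that] that unfolding phi_def Cd_def by simp
  have eq: "phi x = phi y" if "f $ x \<noteq> 0" "f $ y \<noteq> 0" for x y
    using all_eq[OF sym ef eg gphi Hphi assms(2) that] by blast
  show ?thesis
  proof (intro ballI)
    fix D1 D2 assume D: "D1 \<in> weak_nodal_domains M f" "D2 \<in> weak_nodal_domains M f"
    obtain y1 where y1: "f $ y1 \<noteq> 0" "D1 = Cd M f y1"
      using D(1) unfolding weak_nodal_domains_def W_classes_def Cd_def cls_def nonzero_set_def by auto
    obtain y2 where y2: "f $ y2 \<noteq> 0" "D2 = Cd M f y2"
      using D(2) unfolding weak_nodal_domains_def W_classes_def Cd_def cls_def nonzero_set_def by auto
    show "a D1 = a D2" using eq[OF y1(1) y2(1)] y1 y2 by (simp add: phi_def)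
  qed
qed

end
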